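(* Let $\psi\in C^\infty(P)$ be strongly convex and for $s\in\mathbb R$ let $g_s=g_P+s\psi$ with Hessian $H_s$ on $\check P$. Then for each vertex $v$ of $P$ and each $s\in\mathbb R$ there is a positive-definite island of $g_s$ containing $v$; that is, there exists a connected open neighbourhood $U^v_s$ of $v$ in $P$ such that $H_s(x)$ is positive definite for all $x\in U^v_s\cap\check P$.
   Context: Let $P=\{x\in\mathbb R^n:\ell_j(x)=\langle\nu_j,x\rangle+\lambda_j\ge0,\ j=1,\dots,r\}$ be a Delzant polytope (with primitive inward normals $\nu_j$) with interior $\check P$, and $g_P=\frac12\sum_{j=1}^r\ell_j\log\ell_j$ on $\check P$. Strongly convex means the Hessian of $\psi$ is positive definite on $P$. Positive-definite islands are the connected open regions of $P$ on which $H_s$ is positive definite. *)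

theory Defs
  imports "HOL-Analysis.Analysis"
begin

primrec pd :: "'n::finite list \<Rightarrow> (real^'n \<Rightarrow> real) \<Rightarrow> real^'n \<Rightarrow> real" where
  "pd [] f = f"
| "pd (i # is) f = (\<lambda>x. deriv (\<lambda>t. pd is f (x + t *\<^sub>R axis i 1)) 0)"

definition smooth_on :: "(real^'n::finite) set \<Rightarrow> (real^'n \<Rightarrow> real) \<Rightarrow> bool" where
  "smooth_on S f \<longleftrightarrow> open S \<and>
     (\<forall>is. continuous_on S (pd is f) \<and>
       (\<forall>i. \<forall>x\<in>S. (\<lambda>t. pd is f (x + t *\<^sub>R axis i 1)) differentiable (at 0)))"

definition hess :: "(real^'n::finite \<Rightarrow> real) \<Rightarrow> real^'n \<Rightarrow> real^'n^'n" where
  "hess f x = (\<chi> i j. pd [i, j] f x)"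

definition pos_def :: "real^'n^'n::finite \<Rightarrow> bool" where
  "pos_def A \<longleftrightarrow> transpose A = A \<and> (\<forall>y. y \<noteq> 0 \<longrightarrow> y \<bullet> (A *v y) > 0)"

definition lfun :: "(nat \<Rightarrow> real^'n::finite) \<Rightarrow> (nat \<Rightarrow> real) \<Rightarrow> nat \<Rightarrow> real^'n \<Rightarrow> real" where
  "lfun nu lam j x = nu j \<bullet> x + lam j"

definition polytope_of :: "(nat \<Rightarrow> real^'n::finite) \<Rightarrow> (nat \<Rightarrow> real) \<Rightarrow> nat \<Rightarrow> (real^'n) set" where
  "polytope_of nu lam r = {x. \<forall>j<r. lfun nu lam j x \<ge> 0}"

definition integral_vec :: "real^'n::finite \<Rightarrow> bool" where
  "integral_vec z \<longleftrightarrow> (\<forall>i. z $ i \<in> \<int>)"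

definition primitive_vec :: "real^'n::finite \<Rightarrow> bool" where
  "primitive_vec z \<longleftrightarrow> integral_vec z \<and>
     (\<forall>k::int. k > 0 \<longrightarrow> integral_vec ((1 / of_int k) *\<^sub>R z) \<longrightarrow> k = 1)"

text \<open>Delzant polytope given by r inequalities (one per facet) with primitive inward normals:
  bounded, full-dimensional, each inequality cuts out a distinct facet, and at every
  vertex exactly n facets meet, their normals forming a Z-basis of Z^n.\<close>
definition delzant :: "(nat \<Rightarrow> real^'n::finite) \<Rightarrow> (nat \<Rightarrow> real) \<Rightarrow> nat \<Rightarrow> bool" where
  "delzant nu lam r \<longleftrightarrow>
    (let P = polytope_of nu lam r in
      bounded P \<and> interior P \<noteq> {} \<and>
      (\<forall>j<r. primitive_vec (nu j)) \<and>
      (\<forall>j<r. {x\<in>P. lfun nu lam j x = 0} facet_of P) \<and>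
      inj_on (\<lambda>j. {x\<in>P. lfun nu lam j x = 0}) {..<r} \<and>
      (\<forall>v. v extreme_point_of P \<longrightarrow>
         (let J = {j. j < r \<and> lfun nu lam j v = 0} in
            card J = CARD('n) \<and>
            (\<forall>z. integral_vec z \<longrightarrow> (\<exists>c::nat \<Rightarrow> int. z = (\<Sum>j\<in>J. of_int (c j) *\<^sub>R nu j))))))"

definition gP :: "(nat \<Rightarrow> real^'n::finite) \<Rightarrow> (nat \<Rightarrow> real) \<Rightarrow> nat \<Rightarrow> real^'n \<Rightarrow> real" where
  "gP nu lam r x = (1/2) * (\<Sum>j<r. lfun nu lam j x * ln (lfun nu lam j x))"

end

theory Submission imports Defs begin

lemma lfun_line: "lfun nu lam j (y + t *\<^sub>R axis k 1) = lfun nu lam j y + t * nu j $ k"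
  by (simp add: lfun_def inner_add_right inner_axis)

lemma d1:
  fixes nu :: "nat \<Rightarrow> real^'n::finite"
  assumes pos: "\<forall>j<r. lfun nu lam j y > 0"
    and dpsi: "(\<lambda>t. psi (y + t *\<^sub>R axis k 1)) differentiable at 0"
  shows "((\<lambda>t. gP nu lam r (y + t *\<^sub>R axis k 1) + s * psi (y + t *\<^sub>R axis k 1)) has_real_derivative
     ((1/2) * (\<Sum>j<r. nu j $ k * (ln (lfun nu lam j y) + 1)) + s * pd [k] psi y)) (at 0)"
proof -
  have dp: "((\<lambda>t. psi (y + t *\<^sub>R axis k 1)) has_real_derivative pd [k] psi y) (at 0)"
    using dpsi by (simp add: DERIV_deriv_iff_real_differentiable[symmetric])
  have dj: "((\<lambda>t. lfun nu lam j (y + t *\<^sub>R axis k 1) * ln (lfun nu lam j (y + t *\<^sub>R axis k 1)))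
     has_real_derivative nu j $ k * (ln (lfun nu lam j y) + 1)) (at 0)" if "j < r" for j
  proof -
    have p: "lfun nu lam j y > 0" using pos that by auto
    have h1: "((\<lambda>t. lfun nu lam j y + t * nu j $ k) has_real_derivative nu j $ k) (at 0)"
      by (auto intro!: derivative_eq_intros)
    have h2: "((\<lambda>t. ln (lfun nu lam j y + t * nu j $ k)) has_real_derivative inverse (lfun nu lam j y) * nu j $ k) (at 0)"
      using DERIV_chain2[OF DERIV_ln[of "lfun nu lam j y + 0 * nu j $ k"] h1] p by simp
    have "((\<lambda>t. (lfun nu lam j y + t * nu j $ k) * ln (lfun nu lam j y + t * nu j $ k))
     has_real_derivative nu j $ k * ln (lfun nu lam j y + 0 * nu j $ k) + (inverse (lfun nu lam j y) * nu j $ k) * (lfun nu lam j y + 0 * nu j $ k)) (at 0)"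
      by (rule DERIV_mult[OF h1 h2])
    then show ?thesis unfolding lfun_line using p by (simp add: field_simps)
  qed
  have "((\<lambda>t. (\<Sum>j<r. lfun nu lam j (y + t *\<^sub>R axis k 1) * ln (lfun nu lam j (y + t *\<^sub>R axis k 1))))
     has_real_derivative (\<Sum>j<r. nu j $ k * (ln (lfun nu lam j y) + 1))) (at 0)"
    by (rule DERIV_sum) (use dj in auto)
  from DERIV_add[OF DERIV_cmult[OF this, of "1/2"] DERIV_cmult[OF dp, of s]]
  show ?thesis by (simp add: gP_def)
qed

lemma d2:
  fixes nu :: "nat \<Rightarrow> real^'n::finite"
  assumes oO: "open Om" and xO: "x \<in> Om" and posO: "\<forall>y\<in>Om. \<forall>j<r. lfun nu lam j y > 0"
    and OW: "Om \<subseteq> W" and sm: "smooth_on W psi"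
  shows "pd [i,k] (\<lambda>y. gP nu lam r y + s * psi y) x =
     (1/2) * (\<Sum>j<r. nu j $ k * nu j $ i / lfun nu lam j x) + s * pd [i,k] psi x"
proof -
  define F where "F y = (1/2) * (\<Sum>j<r. nu j $ k * (ln (lfun nu lam j y) + 1)) + s * pd [k] psi y" for y
  have eqO: "pd [k] (\<lambda>y. gP nu lam r y + s * psi y) y = F y" if "y \<in> Om" for y
  proof -
    have "(\<lambda>t. pd [] psi (y + t *\<^sub>R axis k 1)) differentiable at 0"
      using sm OW that unfolding smooth_on_def by blast
    then have "(\<lambda>t. psi (y + t *\<^sub>R axis k 1)) differentiable at 0" by simp
    from DERIV_imp_deriv[OF d1[OF _ this, of r nu lam s]] posO that
    show ?thesis by (simp add: F_def)
  qed
  have dj: "((\<lambda>t. nu j $ k * (ln (lfun nu lam j (x + t *\<^sub>R axis i 1)) + 1))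
     has_real_derivative nu j $ k * nu j $ i / lfun nu lam j x) (at 0)" if "j < r" for j
  proof -
    have p: "lfun nu lam j x > 0" using posO xO that by auto
    have h1: "((\<lambda>t. lfun nu lam j x + t * nu j $ i) has_real_derivative nu j $ i) (at 0)"
      by (auto intro!: derivative_eq_intros)
    have h2: "((\<lambda>t. ln (lfun nu lam j x + t * nu j $ i)) has_real_derivative inverse (lfun nu lam j x) * nu j $ i) (at 0)"
      using DERIV_chain2[OF DERIV_ln[of "lfun nu lam j x + 0 * nu j $ i"] h1] p by simp
    have "((\<lambda>t. nu j $ k * (ln (lfun nu lam j x + t * nu j $ i) + 1)) has_real_derivative
       nu j $ k * (inverse (lfun nu lam j x) * nu j $ i + 0)) (at 0)"
      by (intro DERIV_cmult DERIV_add h2 DERIV_const)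
    then show ?thesis unfolding lfun_line by (simp add: field_simps)
  qed
  have s1: "((\<lambda>t. (\<Sum>j<r. nu j $ k * (ln (lfun nu lam j (x + t *\<^sub>R axis i 1)) + 1)))
     has_real_derivative (\<Sum>j<r. nu j $ k * nu j $ i / lfun nu lam j x)) (at 0)"
    by (rule DERIV_sum) (use dj in auto)
  have "(\<lambda>t. pd [k] psi (x + t *\<^sub>R axis i 1)) differentiable at 0"
    using sm OW xO unfolding smooth_on_def by blast
  then have dp: "((\<lambda>t. pd [k] psi (x + t *\<^sub>R axis i 1)) has_real_derivative pd [i,k] psi x) (at 0)"
    by (simp add: DERIV_deriv_iff_real_differentiable[symmetric])
  have dF: "((\<lambda>t. F (x + t *\<^sub>R axis i 1)) has_real_derivative
     (1/2) * (\<Sum>j<r. nu j $ k * nu j $ i / lfun nu lam j x) + s * pd [i,k] psi x) (at 0)"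
    unfolding F_def by (intro DERIV_add DERIV_cmult s1 dp)
  define S where "S = (\<lambda>t::real. x + t *\<^sub>R axis i 1) -` Om"
  have oS: "open S" unfolding S_def
    by (rule continuous_open_vimage[OF oO]) (auto intro!: continuous_intros)
  have "((\<lambda>t. pd [k] (\<lambda>y. gP nu lam r y + s * psi y) (x + t *\<^sub>R axis i 1)) has_real_derivative
     (1/2) * (\<Sum>j<r. nu j $ k * nu j $ i / lfun nu lam j x) + s * pd [i,k] psi x) (at 0)"
    by (rule has_field_derivative_transform_within_open[OF dF oS]) (use xO eqO in \<open>auto simp: S_def\<close>)
  from DERIV_imp_deriv[OF this] show ?thesis by simp
qed

lemma quad:
  fixes nu :: "nat \<Rightarrow> real^'n::finite" and y :: "real^'n"
  shows "y \<bullet> ((\<chi> i k. (1/2) * (\<Sum>j<r. nu j $ k * nu j $ i / d j) + s * B $ i $ k) *v y) =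
     (\<Sum>j<r. (nu j \<bullet> y)^2 / (2 * d j)) + s * (y \<bullet> (B *v y))"
proof -
  have "y \<bullet> ((\<chi> i k. (1/2) * (\<Sum>j<r. nu j $ k * nu j $ i / d j) + s * B $ i $ k) *v y) =
     (\<Sum>i\<in>UNIV. \<Sum>k\<in>UNIV. \<Sum>j<r. y $ i * y $ k * nu j $ k * nu j $ i / (2 * d j)) + s * (y \<bullet> (B *v y))"
    by (simp add: inner_vec_def matrix_vector_mult_def sum_distrib_left sum_distrib_right sum.distrib
        algebra_simps)
  also have "(\<Sum>i\<in>UNIV. \<Sum>k\<in>UNIV. \<Sum>j<r. y $ i * y $ k * nu j $ k * nu j $ i / (2 * d j))
      = (\<Sum>j<r. \<Sum>i\<in>UNIV. \<Sum>k\<in>UNIV. y $ i * y $ k * nu j $ k * nu j $ i / (2 * d j))"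
    by (simp add: sum.swap[of _ UNIV "{..<r}"])
  also have "\<dots> = (\<Sum>j<r. (nu j \<bullet> y)^2 / (2 * d j))"
    by (rule sum.cong) (simp_all add: inner_vec_def power2_eq_square sum_distrib_left sum_distrib_right
        sum_divide_distrib algebra_simps)
  finally show ?thesis .
qed

lemma qbound:
  fixes y :: "real^'n::finite" and A :: "real^'n^'n"
  shows "\<bar>y \<bullet> (A *v y)\<bar> \<le> (\<Sum>i\<in>UNIV. \<Sum>k\<in>UNIV. \<bar>A $ i $ k\<bar>) * (norm y)^2"
proof -
  have "\<bar>y \<bullet> (A *v y)\<bar> = \<bar>\<Sum>i\<in>UNIV. \<Sum>k\<in>UNIV. y $ i * A $ i $ k * y $ k\<bar>"
    by (simp add: inner_vec_def matrix_vector_mult_def sum_distrib_left mult.assoc)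
  also have "\<dots> \<le> (\<Sum>i\<in>UNIV. \<Sum>k\<in>UNIV. \<bar>y $ i * A $ i $ k * y $ k\<bar>)"
    by (rule order_trans[OF sum_abs sum_mono[OF sum_abs]])
  also have "\<dots> \<le> (\<Sum>i\<in>UNIV. \<Sum>k\<in>UNIV. \<bar>A $ i $ k\<bar> * (norm y)^2)"
  proof (intro sum_mono)
    fix i k
    have h: "\<bar>y $ i\<bar> * \<bar>y $ k\<bar> \<le> norm y * norm y"
      by (intro mult_mono component_le_norm_cart) auto
    have "\<bar>y $ i * A $ i $ k * y $ k\<bar> = \<bar>A $ i $ k\<bar> * (\<bar>y $ i\<bar> * \<bar>y $ k\<bar>)"
      by (simp add: abs_mult)
    also have "\<dots> \<le> \<bar>A $ i $ k\<bar> * (norm y)^2"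
      by (rule mult_left_mono) (simp_all add: power2_eq_square h)
    finally show "\<bar>y $ i * A $ i $ k * y $ k\<bar> \<le> \<bar>A $ i $ k\<bar> * (norm y)^2" .
  qed
  also have "\<dots> = (\<Sum>i\<in>UNIV. \<Sum>k\<in>UNIV. \<bar>A $ i $ k\<bar>) * (norm y)^2"
    by (simp add: sum_distrib_right)
  finally show ?thesis .
qed

lemma convex_P: "convex (polytope_of nu lam r)"
  unfolding convex_def polytope_of_def
proof (clarsimp)
  fix x y :: "real^'a" and u v :: real and j
  assume x: "\<forall>j<r. 0 \<le> lfun nu lam j x" and y: "\<forall>j<r. 0 \<le> lfun nu lam j y"
    and u: "0 \<le> u" and v: "0 \<le> v" and uv: "u + v = 1" and j: "j < r"
  have "lfun nu lam j (u *\<^sub>R x + v *\<^sub>R y) = u * lfun nu lam j x + v * lfun nu lam j y"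
    using uv by (simp add: lfun_def inner_add_right algebra_simps) (metis mult.commute mult_1 distrib_left uv)
  then show "0 \<le> lfun nu lam j (u *\<^sub>R x + v *\<^sub>R y)"
    using x y u v j by simp
qed

theorem mainTheorem9:
  fixes nu :: "nat \<Rightarrow> real^'n" and lam :: "nat \<Rightarrow> real" and r :: nat
    and psi :: "real^'n \<Rightarrow> real" and s :: real and v :: "real^'n"
  assumes "delzant nu lam r"
    and "\<exists>W. polytope_of nu lam r \<subseteq> W \<and> smooth_on W psi"
    and "\<forall>x\<in>polytope_of nu lam r. pos_def (hess psi x)"
    and "v extreme_point_of polytope_of nu lam r"
  shows "\<exists>U. openin (top_of_set (polytope_of nu lam r)) U \<and> connected U \<and> v \<in> U \<and>
           (\<forall>x\<in>U \<inter> interior (polytope_of nu lam r).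
              pos_def (hess (\<lambda>y. gP nu lam r y + s * psi y) x))"
proof -
  define P where "P = polytope_of nu lam r"
  obtain W where PW: "P \<subseteq> W" and sm: "smooth_on W psi" using assms(2) P_def by blast
  have oW: "open W" using sm smooth_on_def by blast
  have vP: "v \<in> P" using assms(4) P_def extreme_point_of_def by blast
  have vW: "v \<in> W" using vP PW by blast
  define J where "J = {j. j < r \<and> lfun nu lam j v = 0}"
  have finJ: "finite J" and Jr: "J \<subseteq> {..<r}" unfolding J_def by auto
  have del: "\<forall>j<r. primitive_vec (nu j)"
    "card J = CARD('n) \<and> (\<forall>z. integral_vec z \<longrightarrow> (\<exists>c::nat \<Rightarrow> int. z = (\<Sum>j\<in>J. of_int (c j) *\<^sub>R nu j)))"
    using assms(1) assms(4) unfolding delzant_def Let_def J_def by auto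
  have Jne: "J \<noteq> {}" using del(2) by auto
  have nz: "nu j \<noteq> 0" if "j < r" for j
  proof
    assume "nu j = 0"
    then have "primitive_vec (0::real^'n)" using del(1) that by auto
    then have "(2::int) = 1" unfolding primitive_vec_def integral_vec_def by (metis zero_less_numeral scaleR_zero_right zero_index Ints_0)
    then show False by simp
  qed
  have intpos: "lfun nu lam j x > 0" if "x \<in> interior P" "j < r" for x j
  proof -
    have "P \<subseteq> {x. nu j \<bullet> x \<ge> - lam j}" unfolding P_def polytope_of_def lfun_def using that(2) by auto
    then have "interior P \<subseteq> {x. nu j \<bullet> x > - lam j}"
      using interior_mono interior_halfspace_ge[OF nz[OF that(2)]] by blast
    then show ?thesis using that(1) by (auto simp: lfun_def)
  qed
  have span: "\<exists>j\<in>J. nu j \<bullet> u \<noteq> 0" if "u \<noteq> 0" for u :: "real^'n"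
  proof (rule ccontr)
    assume "\<not> ?thesis"
    then have z: "\<forall>j\<in>J. nu j \<bullet> u = 0" by auto
    have "u $ i = 0" for i
    proof -
      have "integral_vec (axis i (1::real))" unfolding integral_vec_def axis_def by auto
      then obtain c :: "nat \<Rightarrow> int" where "axis i 1 = (\<Sum>j\<in>J. of_int (c j) *\<^sub>R nu j)" using del(2) by blast
      then have "axis i 1 \<bullet> u = (\<Sum>j\<in>J. of_int (c j) * (nu j \<bullet> u))"
        by (simp add: inner_sum_left)
      also have "\<dots> = 0" using z by simp
      finally show ?thesis by (simp add: inner_axis')
    qed
    then show False using that by (simp add: vec_eq_iff)
  qed
  define f where "f u = (\<Sum>j\<in>J. (nu j \<bullet> u)^2)" for u :: "real^'n"
  have fpos: "f u > 0" if u0: "u \<noteq> 0" for u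
  proof -
    obtain j where "j \<in> J" "nu j \<bullet> u \<noteq> 0" using span[OF u0] by blast
    then show ?thesis unfolding f_def by (intro sum_pos2[OF finJ, of j]) auto
  qed
  have fcont: "continuous_on (sphere 0 1) f" unfolding f_def by (intro continuous_intros)
  have sne: "sphere (0::real^'n) 1 \<noteq> {}"
    using norm_axis_1[of undefined] by (metis dist_0_norm mem_sphere empty_iff)
  obtain u0 where u0: "u0 \<in> sphere 0 1" "\<forall>u\<in>sphere 0 1. f u0 \<le> f u"
    using continuous_attains_inf[OF compact_sphere sne fcont] by blast
  define c where "c = f u0"
  have cpos: "c > 0" proof -
    have "u0 \<noteq> 0" using u0(1) by auto
    then show ?thesis unfolding c_def using fpos by blast
  qed
  have fbound: "c * (norm y)^2 \<le> f y" for y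
  proof (cases "y = 0")
    case True then show ?thesis by (simp add: f_def)
  next
    case False
    define u where "u = (1 / norm y) *\<^sub>R y"
    have "u \<in> sphere 0 1" using False by (simp add: u_def)
    then have "c \<le> f u" using u0 c_def by auto
    have y: "y = norm y *\<^sub>R u" using False by (simp add: u_def)
    have "f y = (norm y)^2 * f u" unfolding f_def
      by (subst y) (simp add: inner_scaleR_right power_mult_distrib sum_distrib_left)
    then show ?thesis using mult_right_mono[OF \<open>c \<le> f u\<close>, of "(norm y)^2"] by (simp add: mult.commute)
  qed
  define K where "K = (\<Sum>i\<in>UNIV. \<Sum>k\<in>UNIV. \<bar>hess psi v $ i $ k\<bar> + 1)"
  have K0: "K \<ge> 0" unfolding K_def by (intro sum_nonneg) auto
  define m where "m x = (\<Sum>j\<in>J. lfun nu lam j x)" for x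
  have ev1: "eventually (\<lambda>x. \<forall>i k. \<bar>hess psi x $ i $ k - hess psi v $ i $ k\<bar> < 1) (at v)"
  proof (intro eventually_all_finite)
    fix i k
    have "continuous_on W (pd [i,k] psi)" using sm smooth_on_def by blast
    then have "isCont (pd [i,k] psi) v" using continuous_on_eq_continuous_at[OF oW] vW by blast
    then have "((\<lambda>x. hess psi x $ i $ k) \<longlongrightarrow> hess psi v $ i $ k) (at v)"
      by (simp add: hess_def isCont_def)
    then have "eventually (\<lambda>x. dist (hess psi x $ i $ k) (hess psi v $ i $ k) < 1) (at v)"
      by (rule tendstoD) simp
    then show "eventually (\<lambda>x. \<bar>hess psi x $ i $ k - hess psi v $ i $ k\<bar> < 1) (at v)"
      by (simp add: dist_real_def)
  qed
  have mv: "m v = 0" unfolding m_def J_def by simp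
  have "(m \<longlongrightarrow> m v) (at v)" unfolding m_def lfun_def by (intro tendsto_intros)
  then have ev2: "eventually (\<lambda>x. m x < c / (2 * \<bar>s\<bar> * K + 1)) (at v)"
    using mv cpos K0 by (intro order_tendstoD) (auto intro!: divide_pos_pos add_nonneg_pos)
  obtain d where d: "d > 0" "\<forall>x. x \<noteq> v \<and> dist x v < d \<longrightarrow>
      (\<forall>i k. \<bar>hess psi x $ i $ k - hess psi v $ i $ k\<bar> < 1) \<and> m x < c / (2 * \<bar>s\<bar> * K + 1)"
    using eventually_conj[OF ev1 ev2] unfolding eventually_at by auto
  define U where "U = P \<inter> ball v d"
  have o1: "openin (top_of_set P) U" unfolding U_def by (rule openin_open_Int) simp
  have o2: "connected U" unfolding U_def P_def
    by (intro convex_connected convex_Int convex_P convex_ball)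
  have o3: "v \<in> U" using vP d(1) by (simp add: U_def)
  have o4: "pos_def (hess (\<lambda>y. gP nu lam r y + s * psi y) x)" if xU: "x \<in> U \<inter> interior P" for x
  proof -
    have xI: "x \<in> interior P" and xd: "dist x v < d" using xU by (auto simp: U_def dist_commute)
    have xP: "x \<in> P" using xI interior_subset by blast
    have xv: "x \<noteq> v"
    proof
      assume "x = v"
      obtain j where "j \<in> J" using Jne by blast
      then show False using intpos[OF xI, of j] \<open>x = v\<close> by (auto simp: J_def)
    qed
    have bnd: "\<forall>i k. \<bar>hess psi x $ i $ k - hess psi v $ i $ k\<bar> < 1" and mx: "m x < c / (2 * \<bar>s\<bar> * K + 1)"
      using d(2) xv xd by auto
    define Hp where "Hp = hess psi x"
    have HpK: "(\<Sum>i\<in>UNIV. \<Sum>k\<in>UNIV. \<bar>Hp $ i $ k\<bar>) \<le> K"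
      unfolding K_def Hp_def
    proof (intro sum_mono)
      fix i k
      have h: "\<bar>hess psi x $ i $ k - hess psi v $ i $ k\<bar> < 1" using bnd by blast
      show "\<bar>hess psi x $ i $ k\<bar> \<le> \<bar>hess psi v $ i $ k\<bar> + 1" using h by arith
    qed
    have Hsym: "transpose Hp = Hp" using assms(3) xP unfolding P_def Hp_def pos_def_def by blast
    have Hsym': "Hp $ k $ i = Hp $ i $ k" for i k using arg_cong[OF Hsym, of "\<lambda>M. M $ i $ k"] by (simp add: transpose_def)
    have pw: "\<forall>y\<in>interior P. \<forall>j<r. lfun nu lam j y > 0" using intpos by blast
    have IW: "interior P \<subseteq> W" using PW interior_subset by blast
    have H: "hess (\<lambda>y. gP nu lam r y + s * psi y) x =
      (\<chi> i k. (1/2) * (\<Sum>j<r. nu j $ k * nu j $ i / lfun nu lam j x) + s * Hp $ i $ k)"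
      unfolding hess_def Hp_def vec_eq_iff
      using d2[OF open_interior xI pw IW sm] by simp
    show ?thesis unfolding pos_def_def
    proof
      show "transpose (hess (\<lambda>y. gP nu lam r y + s * psi y) x) = hess (\<lambda>y. gP nu lam r y + s * psi y) x"
        unfolding H by (simp add: transpose_def vec_eq_iff Hsym' mult.commute)
    next
      show "\<forall>y. y \<noteq> 0 \<longrightarrow> 0 < y \<bullet> (hess (\<lambda>y. gP nu lam r y + s * psi y) x *v y)"
      proof (intro allI impI)
        fix y :: "real^'n" assume y0: "y \<noteq> 0"
        define n2 where "n2 = (norm y)^2"
        have n2: "n2 > 0" using y0 by (simp add: n2_def)
        have lpos: "\<And>j. j \<in> J \<Longrightarrow> lfun nu lam j x > 0" using intpos[OF xI] Jr by auto
        have lle: "lfun nu lam j x \<le> m x" if "j \<in> J" for j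
          unfolding m_def by (rule member_le_sum[OF that _ finJ]) (use lpos in \<open>auto intro: less_imp_le\<close>)
        obtain j0 where "j0 \<in> J" using Jne by blast
        have mpos: "m x > 0" using lle[OF \<open>j0 \<in> J\<close>] lpos[OF \<open>j0 \<in> J\<close>] by linarith
        have "(\<Sum>j<r. (nu j \<bullet> y)^2 / (2 * lfun nu lam j x)) \<ge> (\<Sum>j\<in>J. (nu j \<bullet> y)^2 / (2 * lfun nu lam j x))"
          by (rule sum_mono2) (use Jr intpos[OF xI] in \<open>auto intro!: divide_nonneg_pos\<close>)
        moreover have "(\<Sum>j\<in>J. (nu j \<bullet> y)^2 / (2 * lfun nu lam j x)) \<ge> (\<Sum>j\<in>J. (nu j \<bullet> y)^2 / (2 * m x))"
          by (rule sum_mono) (use lpos lle mpos in \<open>auto intro!: divide_left_mono mult_pos_pos\<close>)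
        moreover have "(\<Sum>j\<in>J. (nu j \<bullet> y)^2 / (2 * m x)) = f y / (2 * m x)"
          unfolding f_def by (simp add: sum_divide_distrib)
        moreover have "f y / (2 * m x) \<ge> c * n2 / (2 * m x)"
          using fbound[of y] mpos by (auto simp: n2_def intro!: divide_right_mono)
        ultimately have A: "(\<Sum>j<r. (nu j \<bullet> y)^2 / (2 * lfun nu lam j x)) \<ge> c * n2 / (2 * m x)" by linarith
        have "\<bar>y \<bullet> (Hp *v y)\<bar> \<le> K * n2"
          using qbound[of y Hp] HpK n2 unfolding n2_def by (meson mult_right_mono order_trans zero_le_power2)
        then have "\<bar>s\<bar> * \<bar>y \<bullet> (Hp *v y)\<bar> \<le> \<bar>s\<bar> * (K * n2)" by (rule mult_left_mono) simp
        then have "\<bar>s * (y \<bullet> (Hp *v y))\<bar> \<le> \<bar>s\<bar> * K * n2" by (simp add: abs_mult mult.assoc)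
        then have B: "s * (y \<bullet> (Hp *v y)) \<ge> - (\<bar>s\<bar> * K * n2)" by linarith
        have "m x * (2 * \<bar>s\<bar> * K + 1) < c" using mx K0 by (simp add: pos_less_divide_eq[symmetric] add_nonneg_pos)
        then have "2 * m x * \<bar>s\<bar> * K < c" using mpos by (simp add: algebra_simps)
        then have "\<bar>s\<bar> * K * n2 * (2 * m x) < c * n2" using n2 by (simp add: algebra_simps)
        then have C: "\<bar>s\<bar> * K * n2 < c * n2 / (2 * m x)" using mpos by (simp add: pos_less_divide_eq)
        show "0 < y \<bullet> (hess (\<lambda>y. gP nu lam r y + s * psi y) x *v y)"
          unfolding H quad using A B C by linarith
      qed
    qed
  qed
  show ?thesis unfolding P_def[symmetric]
    apply (rule exI[of _ U])
    using o1 o2 o3 o4 by auto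
qed

end
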